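(* Let $m>n>0$ be relatively prime integers with $(m,n)\neq(2,1)$, and $(r,s)\in\mathbb{Z}^2$. Then $(r,s)=\beta(m,n)$ if and only if $(r+s,\,-s)=\beta(m,\,m-n)$.
   Context: For relatively prime integers $a>b>0$, $\beta(a,b)$ denotes the Bézout coefficients given by the Euclidean algorithm: with $a=q_1b+r_1$, $b=q_2r_1+r_2$, $\dots$, $r_{k-2}=q_kr_{k-1}+r_k$, $r_{k-1}=1$, $r_k=0$ ($r_{-1}=a$, $r_0=b$), write $\begin{pmatrix}a\\ b\end{pmatrix}=M\begin{pmatrix}1\\0\end{pmatrix}$ with $M=\prod_{i=1}^k\begin{pmatrix}q_i&1\\1&0\end{pmatrix}$; then $\beta(a,b)$ is the first row of $M^{-1}$, and $\beta(a,b)=(r,s)$ satisfies $ra+sb=1$. *)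

theory Defs
  imports "HOL-Analysis.Analysis"
begin

function euclid_quots :: "int \<Rightarrow> int \<Rightarrow> int list" where
  "euclid_quots a b = (if b \<le> 0 then [] else (a div b) # euclid_quots b (a mod b))"
  by auto
termination
  by (relation "Wellfounded.measure (\<lambda>(a, b). nat b)") (auto simp: pos_mod_bound)

definition qmat :: "int \<Rightarrow> int^2^2" where
  "qmat q = (\<chi> i j. if i = 1 \<and> j = 1 then q else if i = 2 \<and> j = 2 then 0 else 1)"

definition euclid_matrix :: "int \<Rightarrow> int \<Rightarrow> int^2^2" where
  "euclid_matrix a b = foldr (\<lambda>q A. qmat q ** A) (euclid_quots a b) (mat 1)"

definition beta :: "int \<Rightarrow> int \<Rightarrow> int \<times> int" where
  "beta a b = (let Mi = matrix_inv (euclid_matrix a b) in (Mi $ 1 $ 1, Mi $ 1 $ 2))"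

end

theory Submission
  imports Defs
begin

definition Emat :: "int^2^2" where
  "Emat = (\<chi> i j. if i = 1 then (if j = 1 then 1 else 0) else (if j = 1 then 1 else -1))"

definition qinv :: "int \<Rightarrow> int^2^2" where
  "qinv q = (\<chi> i j. if i = 1 \<and> j = 1 then 0 else if i = 2 \<and> j = 2 then -q else 1)"

lemma two_ne: "(1::2) \<noteq> 2" by simp

lemma qmat_qinv: "qmat q ** qinv q = mat 1" "qinv q ** qmat q = mat 1"
  by (auto simp: vec_eq_iff forall_2 sum_2 matrix_matrix_mult_def qmat_def qinv_def mat_def)

lemma EE: "Emat ** Emat = mat 1"
  by (auto simp: vec_eq_iff forall_2 sum_2 matrix_matrix_mult_def Emat_def mat_def)

lemma qq: "qmat 1 ** qmat (q - 1) = Emat ** qmat q"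
  by (auto simp: vec_eq_iff forall_2 sum_2 matrix_matrix_mult_def Emat_def qmat_def)

lemma inv_unique:
  fixes A B :: "int^2^2"
  assumes "A ** B = mat 1" "B ** A = mat 1"
  shows "matrix_inv A = B"
proof -
  have ex: "\<exists>C. A ** C = mat 1 \<and> C ** A = mat 1" using assms by blast
  define C where "C = matrix_inv A"
  have C: "A ** C = mat 1 \<and> C ** A = mat 1"
    unfolding C_def matrix_inv_def by (rule someI_ex[OF ex])
  have "C = C ** (A ** B)" using assms by (simp add: matrix_mul_rid)
  also have "\<dots> = (C ** A) ** B" by (simp add: matrix_mul_assoc)
  also have "\<dots> = B" using C by (simp add: matrix_mul_lid)
  finally show ?thesis unfolding C_def .
qed

lemma foldr_inv: "\<exists>N. foldr (\<lambda>q A. qmat q ** A) qs (mat 1) ** N = mat 1 \<and>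
   N ** foldr (\<lambda>q A. qmat q ** A) qs (mat 1) = mat 1"
proof (induction qs)
  case Nil
  then show ?case by (auto simp: matrix_mul_lid)
next
  case (Cons q qs)
  then obtain N where N: "foldr (\<lambda>q A. qmat q ** A) qs (mat 1) ** N = mat 1"
    "N ** foldr (\<lambda>q A. qmat q ** A) qs (mat 1) = mat 1" by blast
  let ?F = "foldr (\<lambda>q A. qmat q ** A) qs (mat 1)"
  have "(qmat q ** ?F) ** (N ** qinv q) = qmat q ** (?F ** N) ** qinv q"
    by (simp add: matrix_mul_assoc)
  also have "\<dots> = mat 1" using N qmat_qinv by (simp add: matrix_mul_rid)
  finally have 1: "(qmat q ** ?F) ** (N ** qinv q) = mat 1" .
  have "(N ** qinv q) ** (qmat q ** ?F) = N ** (qinv q ** qmat q) ** ?F"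
    by (simp add: matrix_mul_assoc)
  also have "\<dots> = mat 1" using N qmat_qinv by (simp add: matrix_mul_rid)
  finally have 2: "(N ** qinv q) ** (qmat q ** ?F) = mat 1" .
  show ?case using 1 2 by auto
qed

lemma eq_pos: "b > 0 \<Longrightarrow> euclid_quots a b = a div b # euclid_quots b (a mod b)"
  by (subst euclid_quots.simps) simp

lemma quots_step:
  assumes "0 < n" "2 * n < m"
  shows "euclid_quots m (m - n) = 1 # (m div n - 1) # euclid_quots n (m mod n)"
    "euclid_quots m n = m div n # euclid_quots n (m mod n)"
proof -
  have e: "m = n + (m - n)" by simp
  have d1: "m div (m - n) = 1" using assms
    by (subst e, subst div_add_self2) auto
  have m1: "m mod (m - n) = n" using assms
    by (subst e, subst mod_add_self2) auto
  have d2: "(m - n) div n = m div n - 1"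
  proof -
    have "m = (m - n) + n" by simp
    then have "m div n = (m - n) div n + 1" using assms
      by (metis div_add_self2 less_irrefl)
    then show ?thesis by simp
  qed
  have m2: "(m - n) mod n = m mod n" by (simp add: mod_diff_right_eq[symmetric])
  show "euclid_quots m (m - n) = 1 # (m div n - 1) # euclid_quots n (m mod n)"
    using assms d1 m1 d2 m2 by (simp add: eq_pos)
  show "euclid_quots m n = m div n # euclid_quots n (m mod n)"
    using assms by (simp add: eq_pos)
qed

lemma key:
  assumes "0 < n" "2 * n < m"
  shows "beta m (m - n) = (fst (beta m n) + snd (beta m n), - snd (beta m n))"
proof -
  let ?R = "foldr (\<lambda>q A. qmat q ** A) (euclid_quots n (m mod n)) (mat 1)"
  have M1: "euclid_matrix m n = qmat (m div n) ** ?R"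
    unfolding euclid_matrix_def using quots_step[OF assms] by simp
  have "euclid_matrix m (m - n) = qmat 1 ** (qmat (m div n - 1) ** ?R)"
    unfolding euclid_matrix_def using quots_step[OF assms] by simp
  also have "\<dots> = (Emat ** qmat (m div n)) ** ?R" by (simp add: matrix_mul_assoc qq)
  finally have M2: "euclid_matrix m (m - n) = Emat ** euclid_matrix m n"
    using M1 by (simp add: matrix_mul_assoc)
  obtain N where N: "euclid_matrix m n ** N = mat 1" "N ** euclid_matrix m n = mat 1"
    using foldr_inv unfolding euclid_matrix_def by blast
  have iN: "matrix_inv (euclid_matrix m n) = N" using inv_unique[OF N] .
  have a: "(Emat ** euclid_matrix m n) ** (N ** Emat) = mat 1"
  proof -
    have "(Emat ** euclid_matrix m n) ** (N ** Emat) = Emat ** (euclid_matrix m n ** N) ** Emat"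
      by (simp add: matrix_mul_assoc)
    then show ?thesis using N EE by (simp add: matrix_mul_rid)
  qed
  have b: "(N ** Emat) ** (Emat ** euclid_matrix m n) = mat 1"
  proof -
    have "(N ** Emat) ** (Emat ** euclid_matrix m n) = N ** (Emat ** Emat) ** euclid_matrix m n"
      by (simp add: matrix_mul_assoc)
    then show ?thesis using N EE by (simp add: matrix_mul_rid)
  qed
  have iM: "matrix_inv (euclid_matrix m (m - n)) = N ** Emat"
    using M2 inv_unique[OF a b] by simp
  show ?thesis unfolding beta_def Let_def iM iN
    by (simp add: matrix_matrix_mult_def sum_2 Emat_def)
qed

theorem lemma2p5:
  fixes m n r s :: int
  assumes "m > n" and "n > 0" and "coprime m n" and "(m, n) \<noteq> (2, 1)"
  shows "(r, s) = beta m n \<longleftrightarrow> (r + s, - s) = beta m (m - n)"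
proof (cases "2 * n < m")
  case True
  show ?thesis using key[OF assms(2) True]
    by (cases "beta m n") auto
next
  case False
  have "2 * n \<noteq> m"
  proof
    assume h: "2 * n = m"
    then have "n dvd m" by auto
    then have "is_unit n" using assms(3)
      by (meson coprime_absorb_left coprime_commute)
    then have "n = 1" using assms(2) by auto
    then show False using h assms(4) by auto
  qed
  then have "2 * (m - n) < m" using False by simp
  from key[OF _ this] assms(1) have k: "beta m n = (fst (beta m (m - n)) + snd (beta m (m - n)), - snd (beta m (m - n)))"
    by simp
  show ?thesis using k by (cases "beta m (m - n)") auto
qed

end
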